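(* For every $n\ge1$, $$\tilde A_n(p,q)=\sum_{j=0}^{\lfloor n/2\rfloor}c_{n,j}(p+q)^j(1+pq)^{\lfloor n/2\rfloor-j},$$ where $c_{n,j}$ is the number of permutations $\pi\in\mathfrak S_n$ with $\mathrm{odes}(\pi)=j$ and $\mathrm{edes}(\pi)=0$ (so $A_n(p,0)=\sum_j c_{n,j}p^j$), and $c_{n,j}$ is a positive integer for every $0\le j\le\lfloor n/2\rfloor$.
   Context: For a permutation $\pi=a_1\cdots a_n$ of $[n]$, an index $i\in[n-1]$ is a descent if $a_i>a_{i+1}$; $\mathrm{odes}(\pi)$ and $\mathrm{edes}(\pi)$ count descents at odd and even positions. $A_n(p,q)=\sum_{\pi\in\mathfrak S_n}p^{\mathrm{odes}(\pi)}q^{\mathrm{edes}(\pi)}$. $\tilde A_n(p,q)=A_n(p,q)$ if $n$ is odd and $\tilde A_n(p,q)=(1+q)A_n(p,q)$ if $n$ is even. *)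

theory Defs
  imports "HOL-Combinatorics.Combinatorics"
begin

text \<open>Permutations of [n] are represented as lists a_1 ... a_n (one-line notation),
  i.e. the elements of permutations_of_set {1..n}. Positions are 1-indexed:
  index i (1 \<le> i \<le> n-1) is a descent iff a_i > a_(i+1), i.e. xs!(i-1) > xs!i.\<close>

definition descents :: "nat list \<Rightarrow> nat set" where
  "descents xs = {i. 1 \<le> i \<and> i < length xs \<and> xs ! (i - 1) > xs ! i}"

definition odes :: "nat list \<Rightarrow> nat" where
  "odes xs = card {i \<in> descents xs. odd i}"

definition edes :: "nat list \<Rightarrow> nat" where
  "edes xs = card {i \<in> descents xs. even i}"

definition A_poly :: "nat \<Rightarrow> 'a::comm_ring_1 \<Rightarrow> 'a \<Rightarrow> 'a" where
  "A_poly n p q = (\<Sum>xs\<in>permutations_of_set {1..n}. p ^ odes xs * q ^ edes xs)"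

definition A_tilde :: "nat \<Rightarrow> 'a::comm_ring_1 \<Rightarrow> 'a \<Rightarrow> 'a" where
  "A_tilde n p q = (if odd n then A_poly n p q else (1 + q) * A_poly n p q)"

definition c_coef :: "nat \<Rightarrow> nat \<Rightarrow> nat" where
  "c_coef n j = card {xs \<in> permutations_of_set {1..n}. odes xs = j \<and> edes xs = 0}"

end

theory Submission
  imports Defs "HOL-Computational_Algebra.Polynomial"
begin

definition gm :: "nat \<Rightarrow> (nat \<Rightarrow> int) \<Rightarrow> 'a::comm_ring_1 \<Rightarrow> 'a \<Rightarrow> 'a" where
  "gm L g p q = (\<Sum>j<L. of_int (g j) * (p+q)^j * (1+p*q)^(L-1-j))"
definition sh :: "(nat \<Rightarrow> int) \<Rightarrow> nat \<Rightarrow> int" where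
  "sh g j = (if j = 0 then 0 else g (j-1))"
definition tr :: "nat \<Rightarrow> (nat \<Rightarrow> int) \<Rightarrow> nat \<Rightarrow> int" where
  "tr L g j = (if j < L then g j else 0)"

lemma gm_t: "(1+p*q) * gm L g p q = gm (Suc L) (tr L g) p q"
proof -
  have "gm (Suc L) (tr L g) p q = (\<Sum>j<L. of_int (g j) * (p+q)^j * (1+p*q)^(L-j))"
    unfolding gm_def tr_def by (simp add: sum.lessThan_Suc)
  also have "\<dots> = (\<Sum>j<L. (1+p*q) * (of_int (g j) * (p+q)^j * (1+p*q)^(L-1-j)))"
  proof (rule sum.cong)
    fix j assume "j \<in> {..<L}"
    then have "(1+p*q)^(L-j) = (1+p*q) * (1+p*q)^(L-1-j)"
    proof -
      have "L - j = Suc (L-1-j)" using \<open>j \<in> {..<L}\<close> by simp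
      then show ?thesis by (simp only: power_Suc)
    qed
    then show "of_int (g j) * (p+q)^j * (1+p*q)^(L-j) = (1+p*q) * (of_int (g j) * (p+q)^j * (1+p*q)^(L-1-j))"
      by (simp add: mult_ac)
  qed simp
  finally show ?thesis by (simp add: gm_def sum_distrib_left)
qed

lemma gm_s: "(p+q) * gm L g p q = gm (Suc L) (sh g) p q"
proof -
  have "gm (Suc L) (sh g) p q = (\<Sum>j<L. of_int (g j) * (p+q)^(Suc j) * (1+p*q)^(L-1-j))"
    unfolding gm_def sh_def by (subst sum.lessThan_Suc_shift) (simp add: mult_ac)
  then show ?thesis by (simp add: gm_def sum_distrib_left mult_ac)
qed

lemma gm_add: "gm L (\<lambda>j. f j + g j) p q = gm L f p q + gm L g p q"
  by (simp add: gm_def sum.distrib algebra_simps)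

lemma gm_scale: "gm L (\<lambda>j. c * g j) p q = of_int c * gm L g p q"
  by (simp add: gm_def sum_distrib_left mult_ac)

lemma gm_zero: "gm L (\<lambda>j. 0) p q = 0"
  by (simp add: gm_def)

lemma gm_sum: "gm L (\<lambda>j. \<Sum>z\<in>S. f z j) p q = (\<Sum>z\<in>S. gm L (f z) p q)"
  unfolding gm_def by (simp add: sum_distrib_right sum.swap[of _ S])


definition Wf :: "nat \<Rightarrow> nat \<Rightarrow> nat \<Rightarrow> 'a::comm_ring_1 \<Rightarrow> 'a \<Rightarrow> 'a" where
  "Wf M x z p q = (\<Sum>y=1..M. (if y \<le> x then p else 1) * (if z \<le> y then q else 1))"

lemma sum_const_ival: "(\<And>y. a \<le> y \<Longrightarrow> y \<le> b \<Longrightarrow> f y = c) \<Longrightarrow> (\<Sum>y=a..b. f y) = of_nat (Suc b - a) * c"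
  by (simp add: sum.cong[of "{a..b}" "{a..b}" f "\<lambda>_. c"])

lemma W1: "Wf (Suc z0 + a + c) (Suc z0 + a) (Suc z0) p q
   = of_nat z0 * p + of_nat (Suc a) * (p*q) + of_nat c * q"
proof -
  let ?f = "\<lambda>y. (if y \<le> Suc z0 + a then p else 1) * (if Suc z0 \<le> y then q else 1)"
  have e: "Suc z0 + a + c = z0 + Suc a + c" by simp
  have "Wf (Suc z0 + a + c) (Suc z0 + a) (Suc z0) p q =
     sum ?f {1..z0} + sum ?f {z0+1..z0 + Suc a} + sum ?f {z0 + Suc a+1..z0 + Suc a + c}"
    unfolding Wf_def e
    by (simp only: sum.ub_add_nat[of 1 "z0 + Suc a" _ c] sum.ub_add_nat[of 1 "z0" _ "Suc a"] le_add2 add_0 le_SucI le0 Suc_eq_plus1[symmetric])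
  moreover have "sum ?f {1..z0} = of_nat z0 * p"
    by (subst sum_const_ival[where c=p]) auto
  moreover have "sum ?f {z0+1..z0 + Suc a} = of_nat (Suc a) * (p*q)"
    by (subst sum_const_ival[where c="p*q"]) auto
  moreover have "sum ?f {z0 + Suc a+1..z0 + Suc a + c} = of_nat c * q"
    by (subst sum_const_ival[where c=q]) auto
  ultimately show ?thesis by simp
qed

lemma W2: "Wf (x + a + c) x (Suc x + a) p q = of_nat x * p + of_nat a + of_nat c * q"
proof -
  let ?f = "\<lambda>y. (if y \<le> x then p else 1) * (if Suc x + a \<le> y then q else 1)"
  have "Wf (x + a + c) x (Suc x + a) p q =
     sum ?f {1..x} + sum ?f {x+1..x + a} + sum ?f {x + a+1..x + a + c}"
    unfolding Wf_def
    by (simp only: sum.ub_add_nat[of 1 "x + a" _ c] sum.ub_add_nat[of 1 "x" _ "a"] le_add2 le_SucI le0 Suc_eq_plus1[symmetric])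
  moreover have "sum ?f {1..x} = of_nat x * p"
    by (subst sum_const_ival[where c=p]) auto
  moreover have "sum ?f {x+1..x + a} = of_nat a"
    by (subst sum_const_ival[where c=1]) auto
  moreover have "sum ?f {x + a+1..x + a + c} = of_nat c * q"
    by (subst sum_const_ival[where c=q]) auto
  ultimately show ?thesis by simp
qed


lemma W1g: assumes "1 \<le> z" "z \<le> x" "x \<le> M"
  shows "Wf M x z p q = of_nat (z-1) * p + of_nat (x-z+1) * (p*q) + of_nat (M-x) * q"
proof -
  obtain z0 where z: "z = Suc z0" using assms by (cases z) auto
  obtain a where x: "x = Suc z0 + a" using assms z by (metis le_Suc_ex)
  obtain c where M: "M = Suc z0 + a + c" using assms x by (metis le_Suc_ex)
  show ?thesis unfolding z x M W1 by simp
qed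

lemma W2g: assumes "x < z" "z \<le> Suc M" "x \<le> M"
  shows "Wf M x z p q = of_nat x * p + of_nat (z-x-1) + of_nat (Suc M-z) * q"
proof -
  obtain a where z: "z = Suc x + a" using assms by (metis less_iff_Suc_add add.commute add_Suc)
  obtain c where M: "M = x + a + c" using assms z by (metis le_Suc_ex add_Suc Suc_le_mono)
  show ?thesis unfolding z M W2 by simp
qed

lemma idA:
  fixes G H p q :: "'a::comm_ring_1"
  assumes "1 \<le> z" "z \<le> x" "x \<le> k"
  shows "Wf (2*k) x z p q * (G + (1+q)*H) + Wf (2*k) x (2*k+2-z) p q * (G + p*(1+q)*H)
    = of_nat (x-z+1) * (1+p*q) * G + of_nat (x+z-1) * (p+q) * G + of_nat x * ((p+q)*((1+p*q)+(p+q))) * H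
      + (1+q) * (of_nat (2*k-2*x) * G + of_nat (2*k-2*x) * (p+q) * H)"
    and "Wf (2*k) (2*k-x) z p q * (G + (1+q)*H) + Wf (2*k) (2*k-x) (2*k+2-z) p q * (G + p*(1+q)*H)
    = of_nat (x-z+1) * (1+p*q) * G + of_nat (x+z-1) * (p+q) * G + of_nat x * ((p+q)*((1+p*q)+(p+q))) * H
      + p*(1+q) * (of_nat (2*k-2*x) * G + of_nat (2*k-2*x) * (p+q) * H)"
proof -
  obtain z0 where z: "z = Suc z0" using assms by (cases z) auto
  obtain a where x: "x = Suc z0 + a" using assms z by (metis le_Suc_ex)
  obtain b where k: "k = x + b" using assms by (metis le_Suc_ex)
  have w1: "Wf (2*k) x z p q = of_nat z0 * p + of_nat (Suc a) * (p*q) + of_nat (Suc z0 + a + 2*b) * q"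
    by (subst W1g) (use assms in \<open>auto simp: z x k algebra_simps\<close>)
  have w2: "Wf (2*k) x (2*k+2-z) p q = of_nat x * p + of_nat (Suc a + 2*b) + of_nat z0 * q"
    by (subst W2g) (use assms in \<open>auto simp: z x k algebra_simps\<close>)
  have w3: "Wf (2*k) (2*k-x) z p q = of_nat z0 * p + of_nat (Suc (a+2*b)) * (p*q) + of_nat (Suc z0 + a) * q"
    by (subst W1g) (use assms in \<open>auto simp: z x k algebra_simps\<close>)
  have w4: "Wf (2*k) (2*k-x) (2*k+2-z) p q = of_nat (2*k-x) * p + of_nat (Suc a) + of_nat z0 * q"
    by (subst W2g) (use assms in \<open>auto simp: z x k algebra_simps\<close>)
  have e1: "x-z+1 = Suc a" "x+z-1 = 2*z0 + Suc a" "2*k-2*x = 2*b" "2*k - x = Suc z0 + a + 2*b"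
    by (auto simp: z x k)
  show "Wf (2*k) x z p q * (G + (1+q)*H) + Wf (2*k) x (2*k+2-z) p q * (G + p*(1+q)*H)
    = of_nat (x-z+1) * (1+p*q) * G + of_nat (x+z-1) * (p+q) * G + of_nat x * ((p+q)*((1+p*q)+(p+q))) * H
      + (1+q) * (of_nat (2*k-2*x) * G + of_nat (2*k-2*x) * (p+q) * H)"
    unfolding w1 w2 unfolding e1 unfolding x by (simp add: algebra_simps)
  show "Wf (2*k) (2*k-x) z p q * (G + (1+q)*H) + Wf (2*k) (2*k-x) (2*k+2-z) p q * (G + p*(1+q)*H)
    = of_nat (x-z+1) * (1+p*q) * G + of_nat (x+z-1) * (p+q) * G + of_nat x * ((p+q)*((1+p*q)+(p+q))) * H
      + p*(1+q) * (of_nat (2*k-2*x) * G + of_nat (2*k-2*x) * (p+q) * H)"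
    unfolding w3 w4 unfolding e1 unfolding x by (simp add: algebra_simps)
qed

lemma idB:
  fixes G H p q :: "'a::comm_ring_1"
  assumes "x < z" "z \<le> k"
  shows "Wf (2*k) x z p q * (G + (1+q)*H) + Wf (2*k) x (2*k+2-z) p q * (G + p*(1+q)*H)
    = of_nat (2*x) * (p+q) * G + of_nat x * ((p+q)*((1+p*q)+(p+q))) * H
      + (1+q) * (of_nat (2*k-2*x) * G + of_nat (z-x-1) * (1+p*q) * H + of_nat (2*k+1-z-x) * (p+q) * H)"
    and "Wf (2*k) (2*k-x) z p q * (G + (1+q)*H) + Wf (2*k) (2*k-x) (2*k+2-z) p q * (G + p*(1+q)*H)
    = of_nat (2*x) * (p+q) * G + of_nat x * ((p+q)*((1+p*q)+(p+q))) * H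
      + p*(1+q) * (of_nat (2*k-2*x) * G + of_nat (z-x-1) * (1+p*q) * H + of_nat (2*k+1-z-x) * (p+q) * H)"
proof -
  obtain a where z: "z = Suc x + a" using assms by (metis less_iff_Suc_add add.commute add_Suc)
  obtain b where k: "k = z + b" using assms by (metis le_Suc_ex)
  have w1: "Wf (2*k) x z p q = of_nat x * p + of_nat a + of_nat (x+2+a+2*b) * q"
    by (subst W2g) (use assms in \<open>auto simp: z k algebra_simps\<close>)
  have w2: "Wf (2*k) x (2*k+2-z) p q = of_nat x * p + of_nat (a+2*b+2) + of_nat (x + a) * q"
    by (subst W2g) (use assms in \<open>auto simp: z k algebra_simps\<close>)
  have w3: "Wf (2*k) (2*k-x) z p q = of_nat (x+a) * p + of_nat (a + 2*b + 2) * (p*q) + of_nat x * q"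
    by (subst W1g) (use assms in \<open>auto simp: z k algebra_simps\<close>)
  have w4: "Wf (2*k) (2*k-x) (2*k+2-z) p q = of_nat (z+2*b+1) * p + of_nat a * (p*q) + of_nat x * q"
  proof (cases a)
    case 0
    then show ?thesis
      by (subst W2g) (use assms in \<open>auto simp: z k algebra_simps\<close>)
  next
    case (Suc a1)
    then show ?thesis
      by (subst W1g) (use assms in \<open>auto simp: z k algebra_simps\<close>)
  qed
  have e1: "2*k-2*x = 2*(a+1+b)" "z-x-1 = a" "2*k+1-z-x = a+2*b+2"
    by (auto simp: z k)
  show "Wf (2*k) x z p q * (G + (1+q)*H) + Wf (2*k) x (2*k+2-z) p q * (G + p*(1+q)*H)
    = of_nat (2*x) * (p+q) * G + of_nat x * ((p+q)*((1+p*q)+(p+q))) * H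
      + (1+q) * (of_nat (2*k-2*x) * G + of_nat (z-x-1) * (1+p*q) * H + of_nat (2*k+1-z-x) * (p+q) * H)"
    unfolding w1 w2 unfolding e1 unfolding z by (simp add: algebra_simps)
  show "Wf (2*k) (2*k-x) z p q * (G + (1+q)*H) + Wf (2*k) (2*k-x) (2*k+2-z) p q * (G + p*(1+q)*H)
    = of_nat (2*x) * (p+q) * G + of_nat x * ((p+q)*((1+p*q)+(p+q))) * H
      + p*(1+q) * (of_nat (2*k-2*x) * G + of_nat (z-x-1) * (1+p*q) * H + of_nat (2*k+1-z-x) * (p+q) * H)"
    unfolding w3 w4 unfolding e1 unfolding z by (simp add: algebra_simps)
qed

lemma idM:
  fixes G p q :: "'a::comm_ring_1"
  assumes "x \<le> k"
  shows "Wf (2*k) x (Suc k) p q * G = of_nat x * (p+q) * G + (1+q) * (of_nat (k-x) * G)"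
    and "Wf (2*k) (2*k-x) (Suc k) p q * G = of_nat x * (p+q) * G + p*(1+q) * (of_nat (k-x) * G)"
proof -
  obtain b where k: "k = x + b" using assms by (metis le_Suc_ex)
  have w1: "Wf (2*k) x (Suc k) p q = of_nat x * p + of_nat b + of_nat (x+b) * q"
    by (subst W2g) (use assms in \<open>auto simp: k algebra_simps\<close>)
  have w2: "Wf (2*k) (2*k-x) (Suc k) p q = of_nat (x+b) * p + of_nat b * (p*q) + of_nat x * q"
  proof (cases b)
    case 0
    then show ?thesis
      by (subst W2g) (use assms in \<open>auto simp: k algebra_simps\<close>)
  next
    case (Suc b1)
    then show ?thesis
      by (subst W1g) (use assms in \<open>auto simp: k algebra_simps\<close>)
  qed
  show "Wf (2*k) x (Suc k) p q * G = of_nat x * (p+q) * G + (1+q) * (of_nat (k-x) * G)"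
    unfolding w1 by (simp add: k algebra_simps)
  show "Wf (2*k) (2*k-x) (Suc k) p q * G = of_nat x * (p+q) * G + p*(1+q) * (of_nat (k-x) * G)"
    unfolding w2 by (simp add: k algebra_simps)
qed


definition Step :: "nat \<Rightarrow> (nat \<Rightarrow> 'a::comm_ring_1) \<Rightarrow> nat \<Rightarrow> 'a \<Rightarrow> 'a \<Rightarrow> 'a" where
  "Step k R x p q = (\<Sum>z=1..2*k+1. Wf (2*k) x z p q * R z)"

lemma sum_fold_mid:
  "(\<Sum>z=1..2*k+1. f z) = (\<Sum>z=1..k. f z + f (2*k+2-z)) + f (Suc k)"
proof -
  have "(\<Sum>z=1..2*k+1. f z) = (\<Sum>z=1..k+1. f z) + (\<Sum>z=k+1+1..k+1+k. f z)"
    using sum.ub_add_nat[of 1 "k+1" f k] by (simp add: mult_2 add_ac)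
  also have "(\<Sum>z=k+1+1..k+1+k. f z) = (\<Sum>z=1..k. f (2*k+2-z))"
    by (rule sum.reindex_bij_witness[where i="\<lambda>z. 2*k+2-z" and j="\<lambda>z. 2*k+2-z"]) auto
  finally show ?thesis by (simp add: sum.distrib add_ac)
qed

definition gA where "gA N G H x z j = int (x-z+1) * tr (Suc N) (G z) j + int (x+z-1) * sh (G z) j + int x * sh (\<lambda>i. sh (H z) i + tr N (H z) i) j"
definition gB where "gB N G H x z j = int (2*x) * sh (G z) j + int x * sh (\<lambda>i. sh (H z) i + tr N (H z) i) j"
definition hA where "hA k G H x z j = int (2*k-2*x) * G z j + int (2*k-2*x) * sh (H z) j"
definition hB where "hB k N G H x z j = int (2*k-2*x) * G z j + int (z-x-1) * tr N (H z) j + int (2*k+1-z-x) * sh (H z) j"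

definition stG :: "nat \<Rightarrow> nat \<Rightarrow> (nat \<Rightarrow> nat \<Rightarrow> int) \<Rightarrow> (nat \<Rightarrow> nat \<Rightarrow> int) \<Rightarrow> nat \<Rightarrow> nat \<Rightarrow> int" where
  "stG k N G H x j = (\<Sum>z=1..x. gA N G H x z j) + (\<Sum>z=x+1..k. gB N G H x z j) + int x * sh (G (Suc k)) j"
definition stH :: "nat \<Rightarrow> nat \<Rightarrow> (nat \<Rightarrow> nat \<Rightarrow> int) \<Rightarrow> (nat \<Rightarrow> nat \<Rightarrow> int) \<Rightarrow> nat \<Rightarrow> nat \<Rightarrow> int" where
  "stH k N G H x j = (\<Sum>z=1..x. hA k G H x z j) + (\<Sum>z=x+1..k. hB k N G H x z j) + int (k-x) * G (Suc k) j"

lemma gm_gA: "gm (Suc (Suc N)) (gA N G H x z) p q =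
   of_nat (x-z+1) * (1+p*q) * gm (Suc N) (G z) p q + of_nat (x+z-1) * (p+q) * gm (Suc N) (G z) p q
   + of_nat x * ((p+q)*((1+p*q)+(p+q))) * gm N (H z) p q"
  unfolding gA_def gm_add gm_scale gm_s[symmetric] gm_t[symmetric] by (simp add: algebra_simps)

lemma gm_gB: "gm (Suc (Suc N)) (gB N G H x z) p q =
   of_nat (2*x) * (p+q) * gm (Suc N) (G z) p q
   + of_nat x * ((p+q)*((1+p*q)+(p+q))) * gm N (H z) p q"
  unfolding gB_def gm_add gm_scale gm_s[symmetric] gm_t[symmetric] by (simp add: algebra_simps)

lemma gm_hA: "gm (Suc N) (hA k G H x z) p q =
   of_nat (2*k-2*x) * gm (Suc N) (G z) p q + of_nat (2*k-2*x) * (p+q) * gm N (H z) p q"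
  unfolding hA_def gm_add gm_scale gm_s[symmetric] gm_t[symmetric] by (simp add: algebra_simps)

lemma gm_hB: "gm (Suc N) (hB k N G H x z) p q =
   of_nat (2*k-2*x) * gm (Suc N) (G z) p q + of_nat (z-x-1) * (1+p*q) * gm N (H z) p q
   + of_nat (2*k+1-z-x) * (p+q) * gm N (H z) p q"
  unfolding hB_def gm_add gm_scale gm_s[symmetric] gm_t[symmetric] by (simp add: algebra_simps)

lemma gm_stG: "gm (Suc (Suc N)) (stG k N G H x) p q =
  (\<Sum>z=1..x. gm (Suc (Suc N)) (gA N G H x z) p q) + (\<Sum>z=x+1..k. gm (Suc (Suc N)) (gB N G H x z) p q)
  + of_nat x * (p+q) * gm (Suc N) (G (Suc k)) p q"
proof -
  have "stG k N G H x = (\<lambda>j. (\<lambda>j. (\<Sum>z=1..x. gA N G H x z j) + (\<Sum>z=x+1..k. gB N G H x z j)) j + int x * sh (G (Suc k)) j)"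
    by (rule ext) (simp add: stG_def)
  then show ?thesis
    by (simp only: gm_add gm_sum gm_scale gm_s[symmetric]) (simp add: mult_ac)
qed

lemma gm_stH: "gm (Suc N) (stH k N G H x) p q =
  (\<Sum>z=1..x. gm (Suc N) (hA k G H x z) p q) + (\<Sum>z=x+1..k. gm (Suc N) (hB k N G H x z) p q)
  + of_nat (k-x) * gm (Suc N) (G (Suc k)) p q"
proof -
  have "stH k N G H x = (\<lambda>j. (\<lambda>j. (\<Sum>z=1..x. hA k G H x z j) + (\<Sum>z=x+1..k. hB k N G H x z j)) j + int (k-x) * G (Suc k) j)"
    by (rule ext) (simp add: stH_def)
  then show ?thesis
    by (simp only: gm_add gm_sum gm_scale) simp
qed

lemma split_at: fixes x k :: nat assumes "x \<le> k" shows "(\<Sum>z=1..k. f z) = (\<Sum>z=1..x. f z) + (\<Sum>z=x+1..k. f z)"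
proof -
  obtain b where k: "k = x + b" using assms le_Suc_ex by blast
  have "(\<Sum>z=1..x+b. f z) = (\<Sum>z=1..x. f z) + (\<Sum>z=x+1..x+b. f z)"
    by (rule sum.ub_add_nat) simp
  then show ?thesis by (simp only: k)
qed

lemma propag:
  fixes R :: "nat \<Rightarrow> 'a::comm_ring_1"
  assumes lo: "\<And>z. 1 \<le> z \<Longrightarrow> z \<le> k \<Longrightarrow> R z = gm (Suc N) (G z) p q + (1+q) * gm N (H z) p q
        \<and> R (2*k+2-z) = gm (Suc N) (G z) p q + p*(1+q)*gm N (H z) p q"
  and mid: "R (Suc k) = gm (Suc N) (G (Suc k)) p q"
  and x: "1 \<le> x" "x \<le> k"
  shows "Step k R x p q = gm (Suc (Suc N)) (stG k N G H x) p q + (1+q) * gm (Suc N) (stH k N G H x) p q"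
   and "Step k R (2*k-x) p q = gm (Suc (Suc N)) (stG k N G H x) p q + p*(1+q) * gm (Suc N) (stH k N G H x) p q"
proof -
  let ?Gz = "\<lambda>z. gm (Suc N) (G z) p q" and ?Hz = "\<lambda>z. gm N (H z) p q"
  let ?a = "\<lambda>z. gm (Suc (Suc N)) (gA N G H x z) p q" and ?b = "\<lambda>z. gm (Suc (Suc N)) (gB N G H x z) p q"
  let ?c = "\<lambda>z. gm (Suc N) (hA k G H x z) p q" and ?d = "\<lambda>z. gm (Suc N) (hB k N G H x z) p q"
  { fix u c assume u: "u = x \<and> c = 1+q \<or> u = 2*k-x \<and> c = p*(1+q)"
    have "Step k R u p q = (\<Sum>z=1..k. Wf (2*k) u z p q * R z + Wf (2*k) u (2*k+2-z) p q * R (2*k+2-z))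
        + Wf (2*k) u (Suc k) p q * R (Suc k)"
      unfolding Step_def by (rule sum_fold_mid)
    also have "\<dots> = (\<Sum>z=1..x. Wf (2*k) u z p q * R z + Wf (2*k) u (2*k+2-z) p q * R (2*k+2-z))
        + (\<Sum>z=x+1..k. Wf (2*k) u z p q * R z + Wf (2*k) u (2*k+2-z) p q * R (2*k+2-z))
        + Wf (2*k) u (Suc k) p q * R (Suc k)"
      by (rule arg_cong[where f="\<lambda>a. a + _"], rule split_at[OF x(2)])
    also have "(\<Sum>z=1..x. Wf (2*k) u z p q * R z + Wf (2*k) u (2*k+2-z) p q * R (2*k+2-z))
        = (\<Sum>z=1..x. ?a z + c * ?c z)"
    proof (rule sum.cong)
      fix z assume z: "z \<in> {1..x}"
      then have "R z = ?Gz z + (1+q) * ?Hz z" "R (2*k+2-z) = ?Gz z + p*(1+q) * ?Hz z"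
        using lo[of z] x by auto
      then show "Wf (2*k) u z p q * R z + Wf (2*k) u (2*k+2-z) p q * R (2*k+2-z) = ?a z + c * ?c z"
        unfolding gm_gA gm_hA using idA[where z=z and x=x and k=k and G="?Gz z" and H="?Hz z" and p=p and q=q] z x u by (auto simp: mult.assoc)
    qed simp
    also have "(\<Sum>z=x+1..k. Wf (2*k) u z p q * R z + Wf (2*k) u (2*k+2-z) p q * R (2*k+2-z))
        = (\<Sum>z=x+1..k. ?b z + c * ?d z)"
    proof (rule sum.cong)
      fix z assume z: "z \<in> {x+1..k}"
      then have "R z = ?Gz z + (1+q) * ?Hz z" "R (2*k+2-z) = ?Gz z + p*(1+q) * ?Hz z"
        using lo[of z] x by auto
      then show "Wf (2*k) u z p q * R z + Wf (2*k) u (2*k+2-z) p q * R (2*k+2-z) = ?b z + c * ?d z"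
        unfolding gm_gB gm_hB using idB[where z=z and x=x and k=k and G="?Gz z" and H="?Hz z" and p=p and q=q] z x u by (auto simp: mult.assoc)
    qed simp
    also have "Wf (2*k) u (Suc k) p q * R (Suc k) = of_nat x * (p+q) * ?Gz (Suc k) + c * (of_nat (k-x) * ?Gz (Suc k))"
      unfolding mid using idM[where x=x and k=k and G="?Gz (Suc k)" and p=p and q=q] x u by auto
    finally have "Step k R u p q = gm (Suc (Suc N)) (stG k N G H x) p q + c * gm (Suc N) (stH k N G H x) p q"
      unfolding gm_stG gm_stH by (simp add: sum.distrib sum_distrib_left algebra_simps)
  }
  then show "Step k R x p q = gm (Suc (Suc N)) (stG k N G H x) p q + (1+q) * gm (Suc N) (stH k N G H x) p q"
   and "Step k R (2*k-x) p q = gm (Suc (Suc N)) (stG k N G H x) p q + p*(1+q) * gm (Suc N) (stH k N G H x) p q"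
    by auto
qed


lemma stH_mid: "stH k N G H k = (\<lambda>j. 0)"
  by (rule ext) (simp add: stH_def hA_def)

definition Inv :: "(nat \<Rightarrow> 'a::comm_ring_1) \<Rightarrow> nat \<Rightarrow> nat \<Rightarrow> (nat \<Rightarrow> nat \<Rightarrow> int) \<Rightarrow> (nat \<Rightarrow> nat \<Rightarrow> int) \<Rightarrow> 'a \<Rightarrow> 'a \<Rightarrow> bool" where
  "Inv R k N G H p q \<longleftrightarrow> (\<forall>z. 1 \<le> z \<and> z \<le> k \<longrightarrow>
      R z = gm (Suc N) (G z) p q + (1+q) * gm N (H z) p q
    \<and> R (2*k+2-z) = gm (Suc N) (G z) p q + p*(1+q)*gm N (H z) p q)
    \<and> R (Suc k) = gm (Suc N) (G (Suc k)) p q"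

lemma Inv_step:
  assumes "Inv R k N G H p q" "1 \<le> k"
  shows "Inv (\<lambda>x. Step k R x p q) (k-1) (Suc N) (stG k N G H) (stH k N G H) p q"
proof -
  have lo: "\<And>z. 1 \<le> z \<Longrightarrow> z \<le> k \<Longrightarrow> R z = gm (Suc N) (G z) p q + (1+q) * gm N (H z) p q
        \<and> R (2*k+2-z) = gm (Suc N) (G z) p q + p*(1+q)*gm N (H z) p q"
   and mid: "R (Suc k) = gm (Suc N) (G (Suc k)) p q" using assms(1) unfolding Inv_def by auto
  have e: "2*(k-1)+2 = 2*k" using assms(2) by simp
  show ?thesis
    unfolding Inv_def e
  proof (intro conjI allI impI)
    fix z assume z: "1 \<le> z \<and> z \<le> k - 1"
    show "Step k R z p q = gm (Suc (Suc N)) (stG k N G H z) p q + (1 + q) * gm (Suc N) (stH k N G H z) p q"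
      using propag(1)[OF lo mid] z by auto
    show "Step k R (2*k-z) p q = gm (Suc (Suc N)) (stG k N G H z) p q + p * (1 + q) * gm (Suc N) (stH k N G H z) p q"
      using propag(2)[OF lo mid] z by auto
  next
    have "Step k R k p q = gm (Suc (Suc N)) (stG k N G H k) p q + (1+q) * gm (Suc N) (stH k N G H k) p q"
      using propag(1)[OF lo mid] assms(2) by auto
    then show "Step k R (Suc (k-1)) p q = gm (Suc (Suc N)) (stG k N G H (Suc (k - 1))) p q"
      using assms(2) by (simp add: stH_mid gm_zero)
  qed
qed

definition wt :: "nat \<Rightarrow> 'a::comm_ring_1 \<Rightarrow> 'a \<Rightarrow> 'a" where "wt i p q = (if odd i then p else q)"

fun Rd :: "nat \<Rightarrow> nat \<Rightarrow> nat \<Rightarrow> 'a::comm_ring_1 \<Rightarrow> 'a \<Rightarrow> 'a" where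
  "Rd 0 i x p q = 1"
| "Rd (Suc d) i x p q = (\<Sum>y=1..Suc i. (if y \<le> x then wt i p q else 1) * Rd d (Suc i) y p q)"

lemma Rd_two:
  assumes "1 \<le> k"
  shows "Rd (Suc (Suc d)) (2*k-1) x p q = Step k (\<lambda>z. Rd d (2*k+1) z p q) x p q"
proof -
  have s1: "Suc (2*k-1) = 2*k" using assms by simp
  have o: "odd (2*k-1)" using assms by simp
  have "Rd (Suc (Suc d)) (2*k-1) x p q = (\<Sum>y=1..2*k. (if y \<le> x then p else 1) *
      (\<Sum>z=1..2*k+1. (if z \<le> y then q else 1) * Rd d (2*k+1) z p q))"
  proof -
    have w1: "wt (2*k-1) p q = p" using o by (simp add: wt_def)
    have w2: "wt (2*k) p q = q" by (simp add: wt_def)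
    have s2: "Suc (2*k) = 2*k+1" by simp
    show ?thesis by (simp only: Rd.simps s1 s2 w1 w2)
  qed
  also have "\<dots> = (\<Sum>y=1..2*k. \<Sum>z=1..2*k+1. (if y \<le> x then p else 1) * (if z \<le> y then q else 1) * Rd d (2*k+1) z p q)"
    by (simp only: sum_distrib_left mult.assoc)
  also have "\<dots> = (\<Sum>z=1..2*k+1. \<Sum>y=1..2*k. (if y \<le> x then p else 1) * (if z \<le> y then q else 1) * Rd d (2*k+1) z p q)"
    by (rule sum.swap)
  also have "\<dots> = Step k (\<lambda>z. Rd d (2*k+1) z p q) x p q"
    unfolding Step_def Wf_def by (simp add: sum_distrib_right)
  finally show ?thesis .
qed


definition cf :: "nat \<Rightarrow> 'a::comm_ring_1 \<Rightarrow> 'a" where "cf n q = (if odd n then 1 else 1+q)"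
definition Lv :: "nat \<Rightarrow> nat \<Rightarrow> nat \<Rightarrow> 'a::comm_ring_1 \<Rightarrow> 'a \<Rightarrow> 'a" where
  "Lv n k z p q = cf n q * Rd (n - (2*k+1)) (2*k+1) z p q"
definition k0 :: "nat \<Rightarrow> nat" where "k0 n = (n-1) div 2"
definition N0 :: "nat \<Rightarrow> nat" where "N0 n = (if odd n then 0 else 1)"
definition G0 :: "nat \<Rightarrow> nat \<Rightarrow> nat \<Rightarrow> int" where
  "G0 n z j = (if odd n then (if j = 0 then 1 else 0) else (if j \<le> 1 then int z else 0))"
definition H0 :: "nat \<Rightarrow> nat \<Rightarrow> nat \<Rightarrow> int" where
  "H0 n z j = (if odd n then 0 else (if j = 0 then int (n - 2*z) else 0))"

fun DGH :: "nat \<Rightarrow> nat \<Rightarrow> (nat \<Rightarrow> nat \<Rightarrow> int) \<times> (nat \<Rightarrow> nat \<Rightarrow> int)" where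
  "DGH n 0 = (G0 n, H0 n)"
| "DGH n (Suc d) = (stG (k0 n - d) (N0 n + d) (fst (DGH n d)) (snd (DGH n d)),
                    stH (k0 n - d) (N0 n + d) (fst (DGH n d)) (snd (DGH n d)))"

lemma gm1: "gm (Suc 0) g p q = of_int (g 0)"
  by (simp add: gm_def)
lemma gm2: "gm (Suc (Suc 0)) g p q = of_int (g 0) * (1+p*q) + of_int (g 1) * (p+q)"
  by (simp add: gm_def numeral_2_eq_2 lessThan_Suc)
lemma gm0: "gm 0 g p q = 0"
  by (simp add: gm_def)

lemma top_Inv:
  fixes p q :: "'a::comm_ring_1"
  assumes "1 \<le> n"
  shows "Inv (\<lambda>z. Lv n (k0 n) z p q) (k0 n) (N0 n) (G0 n) (H0 n) p q"
proof (cases "odd n")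
  case True
  then obtain m where n: "n = 2*m+1" by (metis oddE)
  have k: "k0 n = m" by (simp add: k0_def n)
  show ?thesis using True unfolding Inv_def k
    by (simp add: Lv_def cf_def n N0_def G0_def H0_def gm1 gm0)
next
  case False
  then obtain m where n: "n = 2*m" by (metis evenE)
  have m1: "1 \<le> m" using assms n by simp
  have k: "k0 n = m - 1" by (simp add: k0_def n)
  have d: "n - (2*m-1) = Suc 0" using m1 n by simp
  have i: "2*(m-1)+1 = 2*m - 1" using m1 by simp
  have L: "Lv n (m-1) z p q = (1+q) * (of_nat z * p + of_nat (2*m - z))" if z: "z \<le> 2*m" for z
  proof -
    have s: "Suc (2*m-1) = 2*m" using m1 by simp
    have w: "wt (2*m-1) p q = p" using m1 by (simp add: wt_def)
    have "Rd (Suc 0) (2*m-1) z p q = (\<Sum>y=1..2*m. (if y \<le> z then p else 1))"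
      by (simp only: Rd.simps s w mult_1_right)
    also have "\<dots> = Wf (2*m) z (2*m+1) p 1"
      unfolding Wf_def by (simp only: if_cancel mult_1_right)
    also have "\<dots> = of_nat z * p + of_nat (2*m - z)"
      by (subst W2g) (use z in auto)
    finally have r: "Rd (Suc 0) (2*m-1) z p q = of_nat z * p + of_nat (2*m - z)" .
    show ?thesis using False unfolding Lv_def i d r cf_def by simp
  qed
  have e2: "2 * (m - 1) + 2 = 2*m" using m1 by simp
  show ?thesis unfolding Inv_def k e2
  proof (intro conjI allI impI)
    fix z assume z: "1 \<le> z \<and> z \<le> m - 1"
    then obtain b where b: "m = z + b" by (metis le_Suc_ex le_diff_conv2 m1 add.commute le_add1 order_trans)
    have e3: "n - 2*z = 2*b" "2*m - z = z + 2*b" "2*m - (2*m - z) = z" "2*m - (z + 2*b) = z" using n b by auto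
    have z2: "z \<le> 2*m" "2*m - z \<le> 2*m" by (auto simp: b)
    have g0: "gm (Suc (N0 n)) (G0 n z) p q = of_nat z * (1+p*q) + of_nat z * (p+q)"
      using False by (simp add: N0_def G0_def gm2)
    have h0: "gm (N0 n) (H0 n z) p q = of_nat (2*b)"
      using False by (simp add: N0_def H0_def gm1 e3(1))
    show "Lv n (m - 1) z p q = gm (Suc (N0 n)) (G0 n z) p q + (1 + q) * gm (N0 n) (H0 n z) p q"
      unfolding L[OF z2(1)] unfolding g0 h0 e3 by (simp add: algebra_simps)
    show "Lv n (m - 1) (2*m - z) p q = gm (Suc (N0 n)) (G0 n z) p q + p * (1 + q) * gm (N0 n) (H0 n z) p q"
      unfolding L[OF z2(2)] unfolding g0 h0 e3 by (simp add: algebra_simps)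
  next
    have e4: "2*m - m = m" "Suc (m-1) = m" using m1 by auto
    have g0: "gm (Suc (N0 n)) (G0 n m) p q = of_nat m * (1+p*q) + of_nat m * (p+q)"
      using False by (simp add: N0_def G0_def gm2)
    have "Lv n (m - 1) m p q = (1+q) * (of_nat m * p + of_nat m)"
      using L[of m] e4 by simp
    then show "Lv n (m - 1) (Suc (m - 1)) p q = gm (Suc (N0 n)) (G0 n (Suc (m - 1))) p q"
      unfolding e4 g0 by (simp add: algebra_simps)
  qed
qed

lemma Step_scale: "Step k (\<lambda>z. c * R z) x p q = c * Step k R x p q"
  unfolding Step_def sum_distrib_left by (intro sum.cong refl) (simp add: mult_ac)

lemma Lv_step:
  assumes "1 \<le> k" "2*k+1 \<le> n"
  shows "Lv n (k-1) x p q = Step k (\<lambda>z. Lv n k z p q) x p q"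
proof -
  have a: "2*(k-1)+1 = 2*k-1" "n - (2*k-1) = Suc (Suc (n - (2*k+1)))" using assms by auto
  show ?thesis unfolding Lv_def a Rd_two[OF assms(1)] Step_scale ..
qed

lemma DGH_Inv:
  fixes p q :: "'a::comm_ring_1"
  assumes "1 \<le> n"
  shows "d \<le> k0 n \<Longrightarrow> Inv (\<lambda>z. Lv n (k0 n - d) z p q) (k0 n - d) (N0 n + d) (fst (DGH n d)) (snd (DGH n d)) p q"
proof (induction d)
  case 0
  then show ?case using top_Inv[OF assms] by simp
next
  case (Suc d)
  let ?k = "k0 n - d"
  have k1: "1 \<le> ?k" using Suc.prems by simp
  have kn: "2 * ?k + 1 \<le> n" using assms unfolding k0_def by linarith
  have IH: "Inv (\<lambda>z. Lv n ?k z p q) ?k (N0 n + d) (fst (DGH n d)) (snd (DGH n d)) p q"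
    using Suc by simp
  have "Inv (\<lambda>x. Step ?k (\<lambda>z. Lv n ?k z p q) x p q) (?k - 1) (Suc (N0 n + d))
          (stG ?k (N0 n + d) (fst (DGH n d)) (snd (DGH n d))) (stH ?k (N0 n + d) (fst (DGH n d)) (snd (DGH n d))) p q"
    by (rule Inv_step[OF IH k1])
  moreover have "(\<lambda>x. Step ?k (\<lambda>z. Lv n ?k z p q) x p q) = (\<lambda>x. Lv n (?k - 1) x p q)"
    by (intro ext) (rule Lv_step[OF k1 kn, symmetric])
  moreover have "?k - 1 = k0 n - Suc d" by simp
  ultimately show ?case by simp
qed

theorem alg_main:
  fixes p q :: "'a::comm_ring_1"
  assumes "1 \<le> n"
  shows "cf n q * Rd (n-1) 1 1 p q = gm (Suc (n div 2)) (fst (DGH n (k0 n)) 1) p q"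
proof -
  have "Inv (\<lambda>z. Lv n 0 z p q) 0 (N0 n + k0 n) (fst (DGH n (k0 n))) (snd (DGH n (k0 n))) p q"
    using DGH_Inv[OF assms, of "k0 n"] by simp
  moreover have "N0 n + k0 n = n div 2" using assms by (auto simp: N0_def k0_def elim!: oddE evenE)
  ultimately show ?thesis by (simp add: Inv_def Lv_def)
qed


definition fi :: "nat \<Rightarrow> nat \<Rightarrow> nat" where "fi v a = (if v \<le> a then Suc a else a)"
definition gi :: "nat \<Rightarrow> nat \<Rightarrow> nat" where "gi v a = (if v < a then a - 1 else a)"
definition ins :: "nat \<Rightarrow> nat list \<Rightarrow> nat list" where "ins v s = map (fi v) s @ [v]"
definition del :: "nat list \<Rightarrow> nat list" where "del xs = map (gi (last xs)) (butlast xs)"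

lemma fi_inj: "fi v a = fi v b \<Longrightarrow> a = b"
  by (auto simp: fi_def split: if_splits)

lemma fi_ne: "fi v a \<noteq> v"
  by (auto simp: fi_def)

lemma gi_fi: "gi v (fi v a) = a"
  by (auto simp: fi_def gi_def)

lemma fi_gi: "a \<noteq> v \<Longrightarrow> fi v (gi v a) = a"
  by (auto simp: fi_def gi_def)

lemma fi_image: "1 \<le> v \<Longrightarrow> v \<le> Suc n \<Longrightarrow> fi v ` {1..n} = {1..Suc n} - {v}"
proof (intro equalityI subsetI)
  fix b assume "b \<in> fi v ` {1..n}" "1 \<le> v" "v \<le> Suc n"
  then show "b \<in> {1..Suc n} - {v}" by (auto simp: fi_def)
next
  fix b assume b: "b \<in> {1..Suc n} - {v}" and v: "1 \<le> v" "v \<le> Suc n"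
  show "b \<in> fi v ` {1..n}"
  proof (cases "b < v")
    case True
    then have "fi v b = b" by (simp add: fi_def)
    moreover have "b \<in> {1..n}" using b True v by auto
    ultimately show ?thesis by (metis imageI)
  next
    case False
    then have "fi v (b - 1) = b" using b by (auto simp: fi_def)
    moreover have "b - 1 \<in> {1..n}" using b False v by auto
    ultimately show ?thesis by (metis imageI)
  qed
qed

lemma ins_perm:
  assumes s: "s \<in> permutations_of_set {1..n}" and v: "1 \<le> v" "v \<le> Suc n"
  shows "ins v s \<in> permutations_of_set {1..Suc n}"
proof
  have ss: "set s = {1..n}" "distinct s" using s by (auto dest: permutations_of_setD)
  have "set (ins v s) = fi v ` {1..n} \<union> {v}" by (simp add: ins_def ss)
  also have "\<dots> = {1..Suc n}" using fi_image[OF v] v by auto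
  finally show "set (ins v s) = {1..Suc n}" .
  have "inj_on (fi v) (set s)" by (auto intro: inj_onI fi_inj)
  moreover have "v \<notin> set (map (fi v) s)" using fi_ne by (metis (no_types) ex_map_conv in_set_conv_nth)
  ultimately show "distinct (ins v s)" using ss by (simp add: ins_def distinct_map)
qed

lemma last_ins: "last (ins v s) = v" by (simp add: ins_def)

lemma del_ins: "del (ins v s) = s"
  by (simp add: del_def ins_def last_ins map_idI gi_fi comp_def)

lemma del_perm:
  assumes xs: "xs \<in> permutations_of_set {1..Suc n}"
  shows "del xs \<in> permutations_of_set {1..n}" "ins (last xs) (del xs) = xs"
    "1 \<le> last xs" "last xs \<le> Suc n"
proof -
  have ss: "set xs = {1..Suc n}" "distinct xs" using xs by (auto dest: permutations_of_setD)
  then have ne: "xs \<noteq> []" by auto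
  let ?v = "last xs"
  have xe: "xs = butlast xs @ [?v]" using ne by simp
  have vin: "?v \<in> {1..Suc n}" using ss ne last_in_set by blast
  then show "1 \<le> last xs" "last xs \<le> Suc n" by auto
  have db: "distinct (butlast xs @ [?v])" using ss xe by metis
  then have vnot: "?v \<notin> set (butlast xs)" and dbb: "distinct (butlast xs)" by auto
  have sb: "set (butlast xs) = {1..Suc n} - {?v}"
  proof -
    have "set xs = set (butlast xs) \<union> {?v}" by (subst xe) simp
    then show ?thesis using ss vnot by auto
  qed
  have fg: "map (fi ?v) (del xs) = butlast xs"
    unfolding del_def map_map comp_def by (rule map_idI) (metis fi_gi vnot)
  show "ins (last xs) (del xs) = xs" unfolding ins_def fg using xe by simp
  show "del xs \<in> permutations_of_set {1..n}"
  proof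
    have "fi ?v ` set (del xs) = {1..Suc n} - {?v}" using fg sb by (metis set_map)
    also have "\<dots> = fi ?v ` {1..n}" using fi_image vin by auto
    finally have "fi ?v ` set (del xs) = fi ?v ` {1..n}" .
    moreover have "inj (fi ?v)" by (auto intro: injI fi_inj)
    ultimately show "set (del xs) = {1..n}" by (simp add: inj_image_eq_iff)
    have "distinct (map (fi ?v) (del xs))" using fg dbb by simp
    then show "distinct (del xs)" by (simp add: distinct_map)
  qed
qed

lemma fi_less: "fi v b < fi v a \<longleftrightarrow> b < a"
  by (auto simp: fi_def)

lemma descents_ins:
  assumes "length s = n" "1 \<le> n"
  shows "descents (ins v s) = descents s \<union> (if v \<le> last s then {n} else {})"
proof (rule set_eqI)
  fix i
  have L: "length (ins v s) = Suc n" using assms by (simp add: ins_def)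
  have ls: "last s = s ! (n-1)" using assms by (subst last_conv_nth) auto
  show "i \<in> descents (ins v s) \<longleftrightarrow> i \<in> descents s \<union> (if v \<le> last s then {n} else {})"
  proof (cases "1 \<le> i \<and> i < n")
    case True
    then have "ins v s ! (i-1) = fi v (s ! (i-1))" "ins v s ! i = fi v (s ! i)"
      using assms by (auto simp: ins_def nth_append)
    then show ?thesis using True assms L by (auto simp: descents_def fi_less)
  next
    case False
    show ?thesis
    proof (cases "i = n")
      case True
      then have "ins v s ! (i-1) = fi v (s ! (n-1))" "ins v s ! i = v"
        using assms by (auto simp: ins_def nth_append)
      moreover have "fi v a > v \<longleftrightarrow> v \<le> a" for a by (auto simp: fi_def)
      ultimately show ?thesis using True assms L ls by (auto simp: descents_def)
    next
      case False2: False
      then show ?thesis using False L assms by (auto simp: descents_def)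
    qed
  qed
qed

lemma descents_sub: "descents xs \<subseteq> {1..<length xs}"
  by (auto simp: descents_def)

lemma finite_descents[simp]: "finite (descents xs)"
  by (rule finite_subset[OF descents_sub]) simp

lemma wt_ins:
  fixes p q :: "'a::comm_ring_1"
  assumes "length s = n" "1 \<le> n"
  shows "p ^ odes (ins v s) * q ^ edes (ins v s) = (if v \<le> last s then wt n p q else 1) * (p ^ odes s * q ^ edes s)"
proof (cases "v \<le> last s")
  case False
  then show ?thesis using descents_ins[OF assms, of v] by (simp add: odes_def edes_def)
next
  case True
  have D: "descents (ins v s) = insert n (descents s)" using descents_ins[OF assms, of v] True by auto
  have nD: "n \<notin> descents s" using descents_sub[of s] assms by auto
  show ?thesis
  proof (cases "odd n")
    case True
    have "{i \<in> descents (ins v s). odd i} = insert n {i \<in> descents s. odd i}" "{i \<in> descents (ins v s). even i} = {i \<in> descents s. even i}"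
      using D True by auto
    then show ?thesis using nD True \<open>v \<le> last s\<close> by (simp add: odes_def edes_def wt_def mult_ac)
  next
    case False
    have "{i \<in> descents (ins v s). odd i} = {i \<in> descents s. odd i}" "{i \<in> descents (ins v s). even i} = insert n {i \<in> descents s. even i}"
      using D False by auto
    then show ?thesis using nD False \<open>v \<le> last s\<close> by (simp add: odes_def edes_def wt_def mult_ac)
  qed
qed

definition Fv :: "nat \<Rightarrow> nat \<Rightarrow> 'a::comm_ring_1 \<Rightarrow> 'a \<Rightarrow> 'a" where
  "Fv n v p q = (\<Sum>xs\<in>{xs \<in> permutations_of_set {1..n}. last xs = v}. p ^ odes xs * q ^ edes xs)"

lemma group_last:
  fixes n :: nat
  assumes "1 \<le> n"
  shows "(\<Sum>xs\<in>permutations_of_set {1..n}. h xs) = (\<Sum>v=1..n. \<Sum>xs\<in>{xs \<in> permutations_of_set {1..n}. last xs = v}. h xs)"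
proof -
  have "last ` permutations_of_set {1..n} \<subseteq> {1..n}"
  proof
    fix u assume "u \<in> last ` permutations_of_set {1..n}"
    then obtain xs where xs: "xs \<in> permutations_of_set {1..n}" "u = last xs" by auto
    have "set xs = {1..n}" using xs by (auto dest: permutations_of_setD)
    moreover have "1 \<in> {1..n}" using assms by simp
    ultimately have "xs \<noteq> []" by auto
    then show "u \<in> {1..n}" using xs \<open>set xs = {1..n}\<close> last_in_set by blast
  qed
  then show ?thesis using sum.group[of "permutations_of_set {1..n}" "{1..n}" last h] by simp
qed

lemma A_F: "1 \<le> n \<Longrightarrow> A_poly n p q = (\<Sum>v=1..n. Fv n v p q)"
  unfolding A_poly_def Fv_def by (rule group_last)

lemma F_rec:
  fixes p q :: "'a::comm_ring_1"
  assumes n: "1 \<le> n" and v: "1 \<le> v" "v \<le> Suc n"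
  shows "Fv (Suc n) v p q = (\<Sum>u=1..n. (if v \<le> u then wt n p q else 1) * Fv n u p q)"
proof -
  have "Fv (Suc n) v p q = (\<Sum>s\<in>permutations_of_set {1..n}. p ^ odes (ins v s) * q ^ edes (ins v s))"
    unfolding Fv_def
  proof (rule sum.reindex_bij_witness[where i=del and j="ins v", symmetric])
    fix s assume s: "s \<in> permutations_of_set {1..n}"
    show "del (ins v s) = s" by (rule del_ins)
    show "ins v s \<in> {xs \<in> permutations_of_set {1..Suc n}. last xs = v}"
      using ins_perm[OF s v] last_ins by auto
  next
    fix xs assume xs: "xs \<in> {xs \<in> permutations_of_set {1..Suc n}. last xs = v}"
    then show "ins v (del xs) = xs" "del xs \<in> permutations_of_set {1..n}" using del_perm[of xs n] by auto
  qed simp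
  also have "\<dots> = (\<Sum>s\<in>permutations_of_set {1..n}. (if v \<le> last s then wt n p q else 1) * (p ^ odes s * q ^ edes s))"
  proof (rule sum.cong)
    fix s assume s: "s \<in> permutations_of_set {1..n}"
    have "length s = n" using length_finite_permutations_of_set[OF s] by simp
    then show "p ^ odes (ins v s) * q ^ edes (ins v s) = (if v \<le> last s then wt n p q else 1) * (p ^ odes s * q ^ edes s)"
      using wt_ins n by blast
  qed simp
  also have "\<dots> = (\<Sum>u=1..n. \<Sum>s\<in>{xs \<in> permutations_of_set {1..n}. last xs = u}. (if v \<le> last s then wt n p q else 1) * (p ^ odes s * q ^ edes s))"
    by (rule group_last[OF n])
  also have "\<dots> = (\<Sum>u=1..n. (if v \<le> u then wt n p q else 1) * Fv n u p q)"
    unfolding Fv_def sum_distrib_left by (intro sum.cong refl) auto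
  finally show ?thesis .
qed

lemma F_one: "Fv 1 1 p q = 1"
proof -
  have "permutations_of_set {1..1::nat} = {[1]}"
  proof (intro equalityI subsetI)
    fix xs assume xs: "xs \<in> permutations_of_set {1..1::nat}"
    then have "length xs = 1" using length_finite_permutations_of_set[OF xs] by simp
    then obtain a where a: "xs = [a]" by (metis One_nat_def length_0_conv length_Suc_conv)
    then show "xs \<in> {[1]}" using permutations_of_setD(1)[OF xs] by simp
  qed (auto simp: permutations_of_set_def)
  then have "{xs \<in> permutations_of_set {1..1::nat}. last xs = 1} = {[1]}" by auto
  moreover have "descents [1] = {}" by (simp add: descents_def)
  ultimately show ?thesis unfolding Fv_def odes_def edes_def by simp
qed

lemma A_Rd_gen:
  fixes p q :: "'a::comm_ring_1"
  assumes "1 \<le> n"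
  shows "d < n \<Longrightarrow> A_poly n p q = (\<Sum>x=1..n-d. Fv (n-d) x p q * Rd d (n-d) x p q)"
proof (induction d)
  case 0
  then show ?case using A_F[OF assms] by simp
next
  case (Suc d)
  let ?i = "n - Suc d"
  have i1: "1 \<le> ?i" and e: "n - d = Suc ?i" using Suc.prems by auto
  have "A_poly n p q = (\<Sum>y=1..Suc ?i. Fv (Suc ?i) y p q * Rd d (Suc ?i) y p q)"
    using Suc e by simp
  also have "\<dots> = (\<Sum>y=1..Suc ?i. \<Sum>x=1..?i. (if y \<le> x then wt ?i p q else 1) * Fv ?i x p q * Rd d (Suc ?i) y p q)"
    by (intro sum.cong refl) (simp add: F_rec[OF i1] sum_distrib_right)
  also have "\<dots> = (\<Sum>x=1..?i. \<Sum>y=1..Suc ?i. (if y \<le> x then wt ?i p q else 1) * Fv ?i x p q * Rd d (Suc ?i) y p q)"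
    by (rule sum.swap)
  also have "\<dots> = (\<Sum>x=1..?i. Fv ?i x p q * Rd (Suc d) ?i x p q)"
    by (simp only: Rd.simps sum_distrib_left) (intro sum.cong refl, simp add: mult_ac)
  finally show ?case .
qed

lemma A_Rd: "1 \<le> n \<Longrightarrow> A_poly n p q = Rd (n-1) 1 1 p q"
  using A_Rd_gen[of n "n-1" p q] F_one[of p q] by simp


definition Gf :: "nat \<Rightarrow> nat \<Rightarrow> int" where "Gf n = fst (DGH n (k0 n)) 1"

lemma A_tilde_gm:
  fixes p q :: "'a::comm_ring_1"
  assumes "1 \<le> n"
  shows "A_tilde n p q = gm (Suc (n div 2)) (Gf n) p q"
  using alg_main[OF assms, of q p] A_Rd[OF assms, of p q]
  by (auto simp: A_tilde_def cf_def Gf_def)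

lemma odes_le: "xs \<in> permutations_of_set {Suc 0..n} \<Longrightarrow> odes xs \<le> n"
proof -
  assume xs: "xs \<in> permutations_of_set {Suc 0..n}"
  have "odes xs \<le> card (descents xs)" unfolding odes_def by (rule card_mono) auto
  also have "\<dots> \<le> card {1..<length xs}" by (rule card_mono[OF _ descents_sub]) simp
  also have "\<dots> \<le> n" using length_finite_permutations_of_set[OF xs] by simp
  finally show ?thesis .
qed

lemma A_X0:
  "A_poly n (monom (1::int) 1) 0 = (\<Sum>j=0..n. of_nat (c_coef n j) * monom 1 j)"
proof -
  let ?P = "permutations_of_set {1..n}"
  let ?S = "{xs \<in> ?P. edes xs = 0}"
  have "A_poly n (monom (1::int) 1) 0 = (\<Sum>xs\<in>?P. if edes xs = 0 then monom 1 (odes xs) else 0)"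
    unfolding A_poly_def by (intro sum.cong refl) (simp add: monom_power power_0_left)
  also have "\<dots> = (\<Sum>xs\<in>?S. monom 1 (odes xs))"
    by (simp add: sum.inter_filter)
  also have "\<dots> = (\<Sum>j\<in>{0..n}. \<Sum>xs\<in>{x. x \<in> ?S \<and> odes x = j}. monom 1 (odes xs))"
    by (rule sum.group[symmetric]) (auto dest: odes_le)
  also have "\<dots> = (\<Sum>j=0..n. of_nat (c_coef n j) * monom 1 j)"
  proof (intro sum.cong refl)
    fix j
    have "{x. x \<in> ?S \<and> odes x = j} = {xs \<in> ?P. odes xs = j \<and> edes xs = 0}" by auto
    then show "(\<Sum>xs\<in>{x. x \<in> ?S \<and> odes x = j}. monom 1 (odes xs)) = of_nat (c_coef n j) * monom 1 j"
      by (simp add: c_coef_def)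
  qed
  finally show ?thesis .
qed

lemma sum_delta_mult: "finite S \<Longrightarrow> (\<Sum>j\<in>S. f j * (if j = i then 1 else 0)) = (if i \<in> S then f i else (0::'a::comm_semiring_1))"
proof -
  assume "finite S"
  have "(\<lambda>j. f j * (if j = i then 1 else 0)) = (\<lambda>j. if j = i then f j else 0)" by auto
  have "(\<Sum>j\<in>S. f j * (if j = i then 1 else 0)) = (\<Sum>j\<in>S. if j = i then f j else 0)"
    by (intro sum.cong refl) simp
  also have "\<dots> = (if i \<in> S then f i else 0)" using \<open>finite S\<close> by (rule sum.delta)
  finally show ?thesis .
qed

lemma c_id:
  assumes n: "1 \<le> n" and i: "i \<le> n div 2"
  shows "Gf n i = int (c_coef n i)"
proof -
  let ?X = "monom (1::int) 1"
  have "A_tilde n ?X 0 = A_poly n ?X 0" by (simp add: A_tilde_def)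
  also have "\<dots> = (\<Sum>j=0..n. of_nat (c_coef n j) * monom 1 j)" by (rule A_X0)
  finally have e1: "A_tilde n ?X 0 = (\<Sum>j=0..n. of_nat (c_coef n j) * monom 1 j)" .
  have "A_tilde n ?X 0 = gm (Suc (n div 2)) (Gf n) ?X 0" by (rule A_tilde_gm[OF n])
  also have "\<dots> = (\<Sum>j<Suc (n div 2). of_int (Gf n j) * monom 1 j)"
    unfolding gm_def by (simp add: monom_power)
  finally have e2: "A_tilde n ?X 0 = (\<Sum>j<Suc (n div 2). of_int (Gf n j) * monom 1 j)" .
  have "coeff (\<Sum>j<Suc (n div 2). of_int (Gf n j) * monom 1 j) i = Gf n i"
    using i by (simp add: coeff_sum of_int_poly coeff_monom sum_delta_mult)
  moreover have "coeff (\<Sum>j=0..n. of_nat (c_coef n j) * monom 1 j) i = int (c_coef n i)"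
    using i by (simp add: coeff_sum of_nat_poly coeff_monom sum_delta_mult)
  ultimately show ?thesis using e1 e2 by simp
qed

definition sw :: "nat \<Rightarrow> nat \<Rightarrow> nat" where
  "sw j y = (if y \<le> 2*j then (if odd y then y+1 else y-1) else y)"

lemma sw_range: "2*j \<le> n \<Longrightarrow> y \<in> {1..n} \<Longrightarrow> sw j y \<in> {1..n}"
  unfolding sw_def by (auto; presburger)

lemma sw_sw: "y \<ge> 1 \<Longrightarrow> sw j (sw j y) = y"
  unfolding sw_def by (auto; presburger)

lemma sw_desc: "1 \<le> i \<Longrightarrow> (sw j i > sw j (Suc i)) \<longleftrightarrow> (odd i \<and> i < 2*j)"
  unfolding sw_def by (auto; presburger)



lemma sw_img:
  assumes jn: "2*j \<le> n"
  shows "sw j ` {1..n} = {1..n}"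
proof
  show "sw j ` {1..n} \<subseteq> {1..n}" using sw_range[OF jn] by blast
  show "{1..n} \<subseteq> sw j ` {1..n}"
  proof
    fix y assume y: "y \<in> {1..n}"
    have a: "sw j y \<in> {1..n}" using sw_range[OF jn y] .
    have b: "y = sw j (sw j y)" using sw_sw[of y j] y by simp
    show "y \<in> sw j ` {1..n}" using a b by (rule rev_image_eqI)
  qed
qed

lemma sw_inj: "inj_on (sw j) {1..n}"
proof (rule inj_onI)
  fix a b assume ab: "a \<in> {1..n}" "b \<in> {1..n}" "sw j a = sw j b"
  have "a = sw j (sw j a)" using sw_sw[of a j] ab(1) by simp
  also have "\<dots> = sw j (sw j b)" using ab(3) by (simp only:)
  also have "\<dots> = b" using sw_sw[of b j] ab(2) by simp
  finally show "a = b" .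
qed

lemma ys_props: "set [1..<n+1] = {1..n}" "distinct [1..<n+1]" "length [1..<n+1] = n"
  "\<And>k. k < n \<Longrightarrow> [1..<n+1] ! k = Suc k"
  by (auto simp del: upt_Suc)

lemma card_odd_less: "card {i::nat. odd i \<and> i < 2*j} = j"
proof -
  have "{i::nat. odd i \<and> i < 2*j} = (\<lambda>l. 2*l+1) ` {..<j}"
  proof (intro equalityI subsetI)
    fix i assume "i \<in> {i::nat. odd i \<and> i < 2*j}"
    then obtain l where l: "i = 2*l+1" "2*l+1 < 2*j" by (auto elim: oddE)
    then have "l < j" by simp
    then show "i \<in> (\<lambda>l. 2*l+1) ` {..<j}" using l by auto
  qed auto
  moreover have "inj_on (\<lambda>l::nat. 2*l+1) {..<j}" by (auto intro: inj_onI)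
  ultimately show ?thesis by (simp add: card_image)
qed

lemma c_pos:
  assumes "j \<le> n div 2"
  shows "c_coef n j > 0"
proof -
  have jn: "2*j \<le> n" using assms by simp
  define ys where "ys = [1..<n+1]"
  have ys: "set ys = {1..n}" "distinct ys" "length ys = n" "\<And>k. k < n \<Longrightarrow> ys ! k = Suc k"
    using ys_props unfolding ys_def by auto
  let ?xs = "map (sw j) ys"
  have set: "set ?xs = {1..n}" using ys(1) sw_img[OF jn] by simp
  have dist: "distinct ?xs" using ys(1,2) sw_inj by (simp add: distinct_map)
  have perm: "?xs \<in> permutations_of_set {1..n}" using set dist by auto
  have len: "length ?xs = n" using ys(3) by simp
  have nth: "\<And>k. k < n \<Longrightarrow> ?xs ! k = sw j (Suc k)" using ys(3,4) by simp
  have D: "descents ?xs = {i. odd i \<and> i < 2*j}"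
  proof (rule set_eqI)
    fix i
    show "i \<in> descents ?xs \<longleftrightarrow> i \<in> {i. odd i \<and> i < 2*j}"
    proof (cases "1 \<le> i \<and> i < n")
      case True
      then have "?xs ! (i-1) = sw j i" "?xs ! i = sw j (Suc i)" using nth[of "i-1"] nth[of i] by auto
      then show ?thesis using True sw_desc[of i j] len by (auto simp: descents_def)
    next
      case False
      then show ?thesis using jn len by (cases "i = 0") (auto simp: descents_def)
    qed
  qed
  have "{i \<in> descents ?xs. odd i} = {i. odd i \<and> i < 2*j}" unfolding D by auto
  then have "odes ?xs = j" unfolding odes_def using card_odd_less[of j] by simp
  moreover have "{i \<in> descents ?xs. even i} = {}" unfolding D by auto
  then have "edes ?xs = 0" unfolding edes_def by simp
  ultimately have "?xs \<in> {xs \<in> permutations_of_set {1..n}. odes xs = j \<and> edes xs = 0}" using perm by simp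
  moreover have "finite {xs \<in> permutations_of_set {1..n}. odes xs = j \<and> edes xs = 0}" by simp
  ultimately show ?thesis unfolding c_coef_def using card_gt_0_iff by blast
qed

theorem mainTheorem5:
  fixes n :: nat
  assumes "n \<ge> 1"
  shows "(\<forall>(p::'a::comm_ring_1) q. A_tilde n p q =
            (\<Sum>j = 0..n div 2. of_nat (c_coef n j) * (p + q) ^ j * (1 + p * q) ^ (n div 2 - j)))
         \<and> (\<forall>j \<le> n div 2. c_coef n j > 0)"
proof (intro conjI allI impI)
  fix p q :: 'a
  have "A_tilde n p q = gm (Suc (n div 2)) (Gf n) p q" by (rule A_tilde_gm[OF assms])
  also have "\<dots> = (\<Sum>j = 0..n div 2. of_nat (c_coef n j) * (p + q) ^ j * (1 + p * q) ^ (n div 2 - j))"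
    unfolding gm_def lessThan_Suc_atMost atLeast0AtMost[symmetric]
    by (intro sum.cong refl) (simp add: c_id[OF assms])
  finally show "A_tilde n p q = (\<Sum>j = 0..n div 2. of_nat (c_coef n j) * (p + q) ^ j * (1 + p * q) ^ (n div 2 - j))" .
next
  fix j :: nat assume "j \<le> n div 2"
  then show "c_coef n j > 0" by (rule c_pos)
qed
end
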